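(* For every affine map $\phi(w)=aw+b$ with $a>0$ and $b\in\mathbb{C}$, $\mathrm{Re}(b)\geq 0$, the composition operator $C_{\phi}f=f\circ\phi$ is not Li-Yorke chaotic on $H^2(\mathbb{C}_{+})$.
   Context: $\mathbb{C}_{+}=\{w\in\mathbb{C}:\mathrm{Re}(w)>0\}$. $H^2(\mathbb{C}_{+})$ is the Hardy space of holomorphic $f$ on $\mathbb{C}_{+}$ with finite norm $\|f\|_2^2=\sup_{0<x<\infty}\frac{1}{\pi}\int_{-\infty}^{\infty}|f(x+iy)|^2\,dy$; $C_\phi$ is bounded on it. An operator $T$ on a Banach space $X$ is Li-Yorke chaotic if there is an uncountable set $S\subset X$ such that for all $x,y\in S$ with $x\neq y$: $\liminf_{n\to\infty}\|T^nx-T^ny\|=0$ and $\limsup_{n\to\infty}\|T^nx-T^ny\|>0$. *)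

theory Defs
  imports "HOL-Analysis.Analysis" "HOL-Library.Liminf_Limsup"
begin

definition right_half_plane :: "complex set" where
  "right_half_plane = {w. Re w > 0}"

definition h2_sup_integral :: "(complex \<Rightarrow> complex) \<Rightarrow> ennreal" where
  "h2_sup_integral f = (SUP x\<in>{0<..}. (\<integral>\<^sup>+ y. ennreal ((cmod (f (Complex x y)))\<^sup>2) \<partial>lborel))"

text \<open>Hardy space H^2 of the right half-plane (functions are only relevant on the half-plane).\<close>
definition H2 :: "(complex \<Rightarrow> complex) set" where
  "H2 = {f. f holomorphic_on right_half_plane \<and> h2_sup_integral f < \<infinity>}"

definition h2_norm :: "(complex \<Rightarrow> complex) \<Rightarrow> real" where
  "h2_norm f = sqrt (enn2real (h2_sup_integral f) / pi)"

definition comp_op :: "(complex \<Rightarrow> complex) \<Rightarrow> (complex \<Rightarrow> complex) \<Rightarrow> (complex \<Rightarrow> complex)" where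
  "comp_op \<phi> f = f \<circ> \<phi>"

definition li_yorke_chaotic_H2 ::
    "((complex \<Rightarrow> complex) \<Rightarrow> (complex \<Rightarrow> complex)) \<Rightarrow> bool" where
  "li_yorke_chaotic_H2 T \<longleftrightarrow>
     (\<exists>S. S \<subseteq> H2 \<and> uncountable S \<and>
        (\<forall>f\<in>S. \<forall>g\<in>S. f \<noteq> g \<longrightarrow>
           liminf (\<lambda>n. ereal (h2_norm ((T ^^ n) f - (T ^^ n) g))) = 0 \<and>
           limsup (\<lambda>n. ereal (h2_norm ((T ^^ n) f - (T ^^ n) g))) > 0))"

end

theory Submission imports Defs "HOL-Complex_Analysis.Complex_Analysis" begin

definition Ih :: "(complex \<Rightarrow> complex) \<Rightarrow> real \<Rightarrow> ennreal" where
  "Ih h x = (\<integral>\<^sup>+ y. ennreal ((cmod (h (Complex x y)))\<^sup>2) \<partial>lborel)"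

definition Jh :: "(complex \<Rightarrow> complex) \<Rightarrow> real \<Rightarrow> ennreal" where
  "Jh h t = (SUP s\<in>{t<..}. Ih h s)"

lemma iter_phi:
  "((\<lambda>w. complex_of_real a * w + b) ^^ n) w = complex_of_real (a^n) * w + ((\<lambda>w. complex_of_real a * w + b) ^^ n) 0"
  by (induction n) (auto simp: algebra_simps)

lemma comp_iter: "(comp_op \<phi> ^^ n) f = f \<circ> (\<phi> ^^ n)"
  by (induction n) (auto simp: comp_op_def funpow_swap1)

lemma cont_line:
  assumes "continuous_on right_half_plane h" "x > 0"
  shows "continuous_on UNIV (\<lambda>y. h (Complex x y))"
proof -
  have "continuous_on UNIV (\<lambda>y::real. Complex x y)"
    unfolding Complex_eq by (intro continuous_intros)
  then show ?thesis
    by (rule continuous_on_compose2[OF assms(1)]) (use assms(2) in \<open>auto simp: right_half_plane_def\<close>)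
qed

lemma meas_line:
  assumes "continuous_on right_half_plane h" "x > 0"
  shows "(\<lambda>y. ennreal ((cmod (h (Complex x y)))\<^sup>2)) \<in> borel_measurable borel"
proof -
  have [measurable]: "(\<lambda>y. h (Complex x y)) \<in> borel_measurable borel"
    by (rule borel_measurable_continuous_onI[OF cont_line[OF assms]])
  show ?thesis by measurable
qed

lemma affine_int:
  assumes "continuous_on right_half_plane h" "A > 0" "X > 0"
  shows "(\<integral>\<^sup>+ y. ennreal ((cmod (h (Complex X (A*y+\<gamma>))))\<^sup>2) \<partial>lborel) = ennreal (1/A) * Ih h X"
proof -
  have "Ih h X = ennreal A * (\<integral>\<^sup>+ y. ennreal ((cmod (h (Complex X (\<gamma> + A*y))))\<^sup>2) \<partial>lborel)"
    unfolding Ih_def using nn_integral_real_affine[OF meas_line[OF assms(1,3)], of A \<gamma>] assms by simp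
  then have "ennreal (1/A) * Ih h X = (ennreal (1/A) * ennreal A) * (\<integral>\<^sup>+ y. ennreal ((cmod (h (Complex X (\<gamma> + A*y))))\<^sup>2) \<partial>lborel)"
    by (simp add: mult.assoc)
  also have "ennreal (1/A) * ennreal A = 1" using assms
    by (simp flip: ennreal_mult)
  finally show ?thesis by (simp add: add.commute)
qed

lemma Re_iter_nonneg:
  assumes "a > 0" "Re b \<ge> 0"
  shows "Re (((\<lambda>w. complex_of_real a * w + b) ^^ n) 0) \<ge> 0"
  by (induction n) (use assms in auto)

lemma Re_iter_Suc:
  "Re (((\<lambda>w. complex_of_real a * w + b) ^^ Suc n) 0) = a * Re (((\<lambda>w. complex_of_real a * w + b) ^^ n) 0) + Re b"
  by simp

lemma key:
  assumes "continuous_on right_half_plane h" "a > 0" "Re b \<ge> 0"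
  defines "\<phi> \<equiv> (\<lambda>w. complex_of_real a * w + b)"
  shows "h2_sup_integral (h \<circ> (\<phi> ^^ n)) = ennreal (1/a^n) * Jh h (Re ((\<phi> ^^ n) 0))"
proof -
  define B where "B = (\<phi> ^^ n) 0"
  have B0: "Re B \<ge> 0" unfolding B_def \<phi>_def using Re_iter_nonneg[OF assms(2,3)] .
  have an: "a^n > 0" using assms by simp
  have it: "(\<phi> ^^ n) (Complex x y) = Complex (a^n * x + Re B) (a^n * y + Im B)" for x y
    unfolding B_def \<phi>_def by (subst iter_phi) (simp add: complex_eq_iff)
  have "h2_sup_integral (h \<circ> (\<phi> ^^ n)) = (SUP x\<in>{0<..}. ennreal (1/a^n) * Ih h (a^n * x + Re B))"
    unfolding h2_sup_integral_def
  proof (rule SUP_cong[OF refl])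
    fix x :: real assume "x \<in> {0<..}"
    then have "a^n * x + Re B > 0" using an B0 by (simp add: add_pos_nonneg)
    then show "(\<integral>\<^sup>+ y. ennreal ((cmod ((h \<circ> (\<phi> ^^ n)) (Complex x y)))\<^sup>2) \<partial>lborel) = ennreal (1/a^n) * Ih h (a^n * x + Re B)"
      unfolding o_def it by (rule affine_int[OF assms(1) an])
  qed
  also have "\<dots> = ennreal (1/a^n) * (SUP x\<in>{0<..}. Ih h (a^n * x + Re B))"
    by (simp add: SUP_mult_left_ennreal)
  also have "(SUP x\<in>{0<..}. Ih h (a^n * x + Re B)) = (SUP s\<in>(\<lambda>x. a^n * x + Re B) ` {0<..}. Ih h s)"
    by (simp add: image_image)
  also have "(\<lambda>x. a^n * x + Re B) ` {0<..} = {Re B<..}"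
  proof (intro equalityI subsetI)
    fix s assume "s \<in> (\<lambda>x. a^n * x + Re B) ` {0<..}" then show "s \<in> {Re B<..}" using an by auto
  next
    fix s assume s: "s \<in> {Re B<..}"
    have "a^n \<noteq> 0" using an by linarith then have "s = a^n * ((s - Re B)/a^n) + Re B" by simp
    moreover have "(s - Re B)/a^n > 0" using s an by simp
    ultimately show "s \<in> (\<lambda>x. a^n * x + Re B) ` {0<..}" by blast
  qed
  finally show ?thesis unfolding Jh_def B_def .
qed

lemma zero_line:
  assumes "continuous_on right_half_plane h" "s > 0" "Ih h s = 0"
  shows "h (Complex s y) = 0"
proof -
  have m: "(\<lambda>y. ennreal ((cmod (h (Complex s y)))\<^sup>2)) \<in> borel_measurable lborel"
    using meas_line[OF assms(1,2)] by simp
  have "AE y in lborel. ennreal ((cmod (h (Complex s y)))\<^sup>2) = 0"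
    using assms(3) nn_integral_0_iff_AE[OF m] unfolding Ih_def by simp
  then have "AE y in lebesgue. y \<in> {y. h (Complex s y) = 0}"
    by (rule AE_completion[THEN eventually_mono]) simp
  moreover have "closed {y. h (Complex s y) = 0}"
    by (rule closed_Collect_eq[OF cont_line[OF assms(1,2)] continuous_on_const])
  ultimately show ?thesis using mem_closed_if_AE_lebesgue by blast
qed

lemma zero_all:
  assumes "h holomorphic_on right_half_plane" "C \<ge> 0" "\<And>s. s > C \<Longrightarrow> Ih h s = 0"
    "w \<in> right_half_plane"
  shows "h w = 0"
proof (rule analytic_continuation[OF assms(1), where U="{z. Re z > C}" and \<xi>="complex_of_real (C+1)"])
  show "open right_half_plane" unfolding right_half_plane_def by (rule open_halfspace_Re_gt)
  show "connected right_half_plane" unfolding right_half_plane_def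
    by (rule convex_connected[OF convex_halfspace_Re_gt])
  show "{z. Re z > C} \<subseteq> right_half_plane" using assms(2) by (auto simp: right_half_plane_def)
  show "complex_of_real (C+1) \<in> right_half_plane" using assms(2) by (auto simp: right_half_plane_def)
  show "complex_of_real (C+1) islimpt {z. Re z > C}"
    by (rule interior_limit_point) (simp add: interior_open[OF open_halfspace_Re_gt])
  show "w \<in> right_half_plane" by fact
  fix z assume z: "z \<in> {z. Re z > C}"
  have cont: "continuous_on right_half_plane h" using assms(1) holomorphic_on_imp_continuous_on by blast
  have "Re z > 0" "Ih h (Re z) = 0" using z assms(2,3) by auto
  from zero_line[OF cont this, of "Im z"] show "h z = 0" by simp
qed

lemma sq_ineq: "(cmod (z - w))\<^sup>2 \<le> 2 * (cmod z)\<^sup>2 + 2 * (cmod w)\<^sup>2"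
proof -
  have "cmod (z - w) \<le> cmod z + cmod w" by (rule norm_triangle_ineq4)
  then have "(cmod (z - w))\<^sup>2 \<le> (cmod z + cmod w)\<^sup>2" by (simp add: power_mono)
  also have "\<dots> \<le> 2 * (cmod z)\<^sup>2 + 2 * (cmod w)\<^sup>2"
  proof -
    have "0 \<le> (cmod z - cmod w)\<^sup>2" by simp
    then show ?thesis unfolding power2_diff power2_sum by linarith
  qed
  finally show ?thesis .
qed

lemma Jh0: "Jh h 0 = h2_sup_integral h"
  unfolding Jh_def h2_sup_integral_def Ih_def by simp

lemma diff_fin:
  assumes "f \<in> H2" "g \<in> H2"
  shows "h2_sup_integral (\<lambda>w. f w - g w) < \<infinity>"
proof -
  have cf: "continuous_on right_half_plane f" "continuous_on right_half_plane g"
    using assms holomorphic_on_imp_continuous_on unfolding H2_def by auto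
  have "h2_sup_integral (\<lambda>w. f w - g w) \<le> 2 * h2_sup_integral f + 2 * h2_sup_integral g"
    unfolding h2_sup_integral_def
  proof (rule SUP_least)
    fix x :: real assume x: "x \<in> {0<..}"
    have "(\<integral>\<^sup>+ y. ennreal ((cmod (f (Complex x y) - g (Complex x y)))\<^sup>2) \<partial>lborel)
       \<le> (\<integral>\<^sup>+ y. 2 * ennreal ((cmod (f (Complex x y)))\<^sup>2) + 2 * ennreal ((cmod (g (Complex x y)))\<^sup>2) \<partial>lborel)"
    proof (rule nn_integral_mono)
      fix y
      have "ennreal ((cmod (f (Complex x y) - g (Complex x y)))\<^sup>2) \<le> ennreal (2 * (cmod (f (Complex x y)))\<^sup>2 + 2 * (cmod (g (Complex x y)))\<^sup>2)"
        by (rule ennreal_leI[OF sq_ineq])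
      also have "\<dots> = 2 * ennreal ((cmod (f (Complex x y)))\<^sup>2) + 2 * ennreal ((cmod (g (Complex x y)))\<^sup>2)"
        by (simp add: ennreal_plus ennreal_mult'')
      finally show "ennreal ((cmod (f (Complex x y) - g (Complex x y)))\<^sup>2) \<le> \<dots>" .
    qed
    also have "\<dots> = 2 * (\<integral>\<^sup>+ y. ennreal ((cmod (f (Complex x y)))\<^sup>2) \<partial>lborel) + 2 * (\<integral>\<^sup>+ y. ennreal ((cmod (g (Complex x y)))\<^sup>2) \<partial>lborel)"
      using meas_line[OF cf(1), of x] meas_line[OF cf(2), of x] x
      by (subst nn_integral_add) (auto simp: nn_integral_cmult)
    also have "\<dots> \<le> 2 * (SUP x\<in>{0<..}. \<integral>\<^sup>+ y. ennreal ((cmod (f (Complex x y)))\<^sup>2) \<partial>lborel) + 2 * (SUP x\<in>{0<..}. \<integral>\<^sup>+ y. ennreal ((cmod (g (Complex x y)))\<^sup>2) \<partial>lborel)"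
      using x by (intro add_mono mult_left_mono SUP_upper) auto
    finally show "(\<integral>\<^sup>+ y. ennreal ((cmod (f (Complex x y) - g (Complex x y)))\<^sup>2) \<partial>lborel) \<le> \<dots>" .
  qed
  also have "\<dots> < \<infinity>" using assms unfolding H2_def
    by (simp add: ennreal_mult_less_top ennreal_add_less_top) 
  finally show ?thesis .
qed

lemma Jh_anti: "t \<le> t' \<Longrightarrow> Jh h t' \<le> Jh h t"
  unfolding Jh_def by (rule SUP_subset_mono) auto

theorem theorem5p1:
  fixes a :: real and b :: complex
  assumes "a > 0" and "Re b \<ge> 0"
  shows "\<not> li_yorke_chaotic_H2 (comp_op (\<lambda>w. complex_of_real a * w + b))"
proof
  define \<phi> where "\<phi> = (\<lambda>w. complex_of_real a * w + b)"
  assume "li_yorke_chaotic_H2 (comp_op (\<lambda>w. complex_of_real a * w + b))"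
  then obtain S where S: "S \<subseteq> H2" "uncountable S" and
    LY: "\<And>f g. f \<in> S \<Longrightarrow> g \<in> S \<Longrightarrow> f \<noteq> g \<Longrightarrow>
       liminf (\<lambda>n. ereal (h2_norm ((comp_op \<phi> ^^ n) f - (comp_op \<phi> ^^ n) g))) = 0 \<and>
       limsup (\<lambda>n. ereal (h2_norm ((comp_op \<phi> ^^ n) f - (comp_op \<phi> ^^ n) g))) > 0"
    unfolding li_yorke_chaotic_H2_def \<phi>_def by blast
  obtain f where f: "f \<in> S" using S(2) by (metis countable_empty equals0I)
  obtain g where g: "g \<in> S" "g \<noteq> f"
  proof -
    have "S \<noteq> {f}" using S(2) by auto
    then show ?thesis using f that by blast
  qed
  define h where "h = (\<lambda>w. f w - g w)"
  have fH: "f \<in> H2" and gH: "g \<in> H2" using f g S(1) by auto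
  have hol: "h holomorphic_on right_half_plane"
    using fH gH unfolding H2_def h_def by (auto intro: holomorphic_on_diff)
  have cont: "continuous_on right_half_plane h" using hol holomorphic_on_imp_continuous_on by blast
  have fin0: "Jh h 0 < \<infinity>" unfolding Jh0 h_def using diff_fin[OF fH gH] .
  define c where "c n = Re ((\<phi> ^^ n) 0)" for n
  have c0: "c n \<ge> 0" for n unfolding c_def \<phi>_def using Re_iter_nonneg[OF assms] .
  have cS: "c (Suc n) = a * c n + Re b" for n unfolding c_def \<phi>_def by simp
  have finc: "Jh h t < \<infinity>" if "t \<ge> 0" for t using Jh_anti[OF that, of h] fin0 by (simp add: le_less_trans)
  define j where "j t = enn2real (Jh h t)" for t
  define u where "u n = h2_norm ((comp_op \<phi> ^^ n) f - (comp_op \<phi> ^^ n) g)" for n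
  have u_eq: "u n = sqrt ((1/a^n) * j (c n) / pi)" for n
  proof -
    have "(comp_op \<phi> ^^ n) f - (comp_op \<phi> ^^ n) g = h \<circ> (\<phi> ^^ n)"
      unfolding comp_iter h_def by (simp add: fun_eq_iff)
    then show ?thesis
      unfolding u_def h2_norm_def j_def c_def \<phi>_def
      using key[OF cont assms, of n] assms(1) by (simp add: enn2real_mult enn2real_ennreal)
  qed
  have LY': "liminf (\<lambda>n. ereal (u n)) = 0" "limsup (\<lambda>n. ereal (u n)) > 0"
    using LY[OF f g(1) g(2)[symmetric]] unfolding u_def by auto
  have j_anti: "j t' \<le> j t" if "0 \<le> t" "t \<le> t'" for t t'
    unfolding j_def using Jh_anti[OF that(2), of h] finc[OF that(1)] by (intro enn2real_mono) auto
  have j0: "j t \<ge> 0" for t unfolding j_def by simp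
  show False
  proof (cases "a \<ge> 1")
    case True
    have cmono: "c n \<le> c (Suc n)" for n
    proof -
      have "1 * c n \<le> a * c n" using True c0[of n] by (rule mult_right_mono)
      then show ?thesis using cS[of n] assms(2) by linarith
    qed
    have "u (Suc n) \<le> u n" for n
    proof -
      have "j (c (Suc n)) \<le> j (c n)" by (rule j_anti[OF c0 cmono])
      moreover have "1/a^(Suc n) \<le> 1/a^n" using True assms(1)
        by (intro divide_left_mono) (auto simp: mult_le_cancel_right1)
      ultimately have "(1/a^(Suc n)) * j (c (Suc n)) \<le> (1/a^n) * j (c n)"
        using j0 assms(1) by (intro mult_mono) auto
      then show ?thesis unfolding u_eq by (intro real_sqrt_le_mono divide_right_mono) auto
    qed
    then have "decseq u" by (rule decseq_SucI)
    moreover have "\<forall>i. 0 \<le> u i" unfolding u_eq using assms(1) by (auto intro!: divide_nonneg_nonneg j0)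
    ultimately obtain L where L: "u \<longlonglongrightarrow> L" using decseq_convergent by blast
    then have "(\<lambda>n. ereal (u n)) \<longlonglongrightarrow> ereal L" by (rule tendsto_ereal)
    then have "liminf (\<lambda>n. ereal (u n)) = ereal L" "limsup (\<lambda>n. ereal (u n)) = ereal L"
      by (auto intro: lim_imp_Liminf lim_imp_Limsup)
    then show False using LY' by simp
  next
    case False
    define C where "C = Re b / (1 - a)"
    have C0: "C \<ge> 0" unfolding C_def using False assms by auto
    have cC: "c n \<le> C" for n
    proof (induction n)
      case 0 then show ?case using C0 by (simp add: c_def)
    next
      case (Suc n)
      have "a * C + Re b = C" unfolding C_def using False by (simp add: field_simps)
      moreover have "a * c n \<le> a * C" using Suc assms(1) by (intro mult_left_mono) auto
      ultimately show ?case unfolding cS by linarith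
    qed
    show False
    proof (cases "j C > 0")
      case True
      have "ereal (sqrt (j C / pi)) \<le> ereal (u n)" for n
      proof -
        have "j C \<le> j (c n)" by (rule j_anti[OF c0 cC])
        moreover have "1 \<le> 1/a^n" using False assms(1) by (simp add: power_le_one)
        ultimately have "j C \<le> (1/a^n) * j (c n)"
          using j0 by (metis mult_1_left mult_mono zero_le_one order_trans)
        then have "j C / pi \<le> (1/a^n) * j (c n) / pi" by (rule divide_right_mono) simp
        then have "sqrt (j C / pi) \<le> sqrt ((1/a^n) * j (c n) / pi)" by (rule real_sqrt_le_mono)
        then show ?thesis unfolding u_eq by simp
      qed
      then have "ereal (sqrt (j C / pi)) \<le> liminf (\<lambda>n. ereal (u n))"
        by (intro Liminf_bounded) auto
      moreover have "j C / pi > 0" using True by simp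
      ultimately show False using LY' by simp
    next
      case False
      then have "Jh h C = 0" using j0[of C] finc[OF C0] unfolding j_def
        by (auto simp: enn2real_eq_0_iff)
      then have "Ih h s = 0" if "s > C" for s
        using SUP_upper[of s "{C<..}" "Ih h"] that unfolding Jh_def by auto
      then have hz: "h w = 0" if "w \<in> right_half_plane" for w
        using zero_all[OF hol C0] that by blast
      have "Ih h s = 0" if "s > 0" for s
        unfolding Ih_def using that hz by (simp add: right_half_plane_def)
      then have "Jh h t = 0" if "t \<ge> 0" for t
      proof -
        have "(SUP s\<in>{t<..}. Ih h s) = (SUP s\<in>{t<..}. (0::ennreal))"
          by (rule SUP_cong) (use that \<open>\<And>s. s > 0 \<Longrightarrow> Ih h s = 0\<close> in auto)
        then show ?thesis unfolding Jh_def by simp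
      qed
      then have "u n = 0" for n unfolding u_eq j_def using c0 by simp
      then have "limsup (\<lambda>n. ereal (u n)) = 0" by (simp add: Limsup_const)
      then show False using LY' by simp
    qed
  qed
qed

end
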